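(* Fix $T\ge1$, $N_s\ge1$ storage devices, $N\ge 1$ net-capacity-surplus profiles $(P_t(k))_{t=1}^T$, and initial states of charge $S_{i,0}\ge 0$. For parameters $\overline{S}_i\ge S_{i,0}$, $\overline{x}_i\ge 0$ ($i=1,\dots,N_s$), let $v_k$ be the optimal value of problem (P2) for profile $k$ and $\mathrm{EUE}=\frac1N\sum_{k=1}^N\big(\sum_t p_t^-(k)+v_k\big)$. Then (P2) is always feasible, and for any device $i$, if its qualified capacity is $\overline{S}_i$, or $\overline{x}_i$, or more generally the parameters $(\overline{S}_i,\overline{x}_i)$ move along a ray $(\overline{S}_i^0+a\theta,\overline{x}_i^0+b\theta)$, $\theta\ge0$, $a,b\ge0$, $(a,b)\ne(0,0)$, with all other parameters fixed, then EUE as a function of this parameter is continuous, piecewise linear, and non-increasing; in particular the MRI $=-\partial\mathrm{EUE}/\partial\mathrm{QC}$ of device $i$ is non-negative wherever it exists, regardless of the profiles.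
   Context: For real $P_t$ (net capacity surplus at hour $t$), $p_t^+=\max\{P_t,0\}$, $p_t^-=\max\{-P_t,0\}$. Problem (P2) (multiple storage devices under reliability dispatch, no cross-charging): minimize over $S_{i,t}$ ($i=1,\dots,N_s$, $t=1,\dots,T$) $$\sum_{t=1}^T\min\Big\{0,\sum_{i=1}^{N_s}(S_{i,t}-S_{i,t-1})\Big\}$$ subject to, for all $i,t$: $0\le S_{i,t}\le\overline{S}_i$ (multipliers $\lambda_{i,1t},\lambda_{i,2t}$); $-\overline{x}_i\le S_{i,t}-S_{i,t-1}\le\overline{x}_i$ (multipliers $\lambda_{i,3t},\lambda_{i,4t}$); $-p_t^-\le S_{i,t}-S_{i,t-1}\le p_t^+$ (multipliers $\lambda_{i,5t},\lambda_{i,6t}$); and for all $t$: $-p_t^-\le\sum_i(S_{i,t}-S_{i,t-1})\le p_t^+$ (multipliers $\lambda_{7t},\lambda_{8t}$). The $S_{i,0}$ are given constants. Profiles are equally likely. *)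

theory Defs
  imports Complex_Main
begin

definition pplus :: "real \<Rightarrow> real" where "pplus x = max x 0"
definition pminus :: "real \<Rightarrow> real" where "pminus x = max (- x) 0"

text \<open>Feasible set of problem (P2) for one profile p (hours 1..T), devices 1..Ns.
  S i t is the state of charge of device i at hour t; S i 0 is fixed to the given S0 i.\<close>
definition feasible_P2 ::
  "nat \<Rightarrow> nat \<Rightarrow> (nat \<Rightarrow> real) \<Rightarrow> (nat \<Rightarrow> real) \<Rightarrow> (nat \<Rightarrow> real) \<Rightarrow> (nat \<Rightarrow> real)
   \<Rightarrow> (nat \<Rightarrow> nat \<Rightarrow> real) \<Rightarrow> bool" where
  "feasible_P2 Ns T S0 Sbar xbar p S \<longleftrightarrow>
     (\<forall>i\<in>{1..Ns}. S i 0 = S0 i) \<and>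
     (\<forall>i\<in>{1..Ns}. \<forall>t\<in>{1..T}.
        0 \<le> S i t \<and> S i t \<le> Sbar i \<and>
        - xbar i \<le> S i t - S i (t - 1) \<and> S i t - S i (t - 1) \<le> xbar i \<and>
        - pminus (p t) \<le> S i t - S i (t - 1) \<and> S i t - S i (t - 1) \<le> pplus (p t)) \<and>
     (\<forall>t\<in>{1..T}.
        - pminus (p t) \<le> (\<Sum>i=1..Ns. S i t - S i (t - 1)) \<and>
        (\<Sum>i=1..Ns. S i t - S i (t - 1)) \<le> pplus (p t))"

definition obj_P2 :: "nat \<Rightarrow> nat \<Rightarrow> (nat \<Rightarrow> nat \<Rightarrow> real) \<Rightarrow> real" where
  "obj_P2 Ns T S = (\<Sum>t=1..T. min 0 (\<Sum>i=1..Ns. S i t - S i (t - 1)))"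

definition optval_P2 ::
  "nat \<Rightarrow> nat \<Rightarrow> (nat \<Rightarrow> real) \<Rightarrow> (nat \<Rightarrow> real) \<Rightarrow> (nat \<Rightarrow> real) \<Rightarrow> (nat \<Rightarrow> real) \<Rightarrow> real" where
  "optval_P2 Ns T S0 Sbar xbar p =
     Inf (obj_P2 Ns T ` {S. feasible_P2 Ns T S0 Sbar xbar p S})"

definition EUE ::
  "nat \<Rightarrow> nat \<Rightarrow> nat \<Rightarrow> (nat \<Rightarrow> nat \<Rightarrow> real) \<Rightarrow> (nat \<Rightarrow> real) \<Rightarrow> (nat \<Rightarrow> real)
   \<Rightarrow> (nat \<Rightarrow> real) \<Rightarrow> real" where
  "EUE N Ns T P S0 Sbar xbar =
     (1 / real N) * (\<Sum>k=1..N. (\<Sum>t=1..T. pminus (P k t)) + optval_P2 Ns T S0 Sbar xbar (P k))"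

definition piecewise_linear_nonneg :: "(real \<Rightarrow> real) \<Rightarrow> bool" where
  "piecewise_linear_nonneg f \<longleftrightarrow>
     (\<exists>xs :: real list. xs \<noteq> [] \<and> xs ! 0 = 0 \<and> sorted_wrt (<) xs \<and>
        (\<forall>j < length xs - 1. \<exists>c d. \<forall>\<theta>\<in>{xs ! j .. xs ! (j+1)}. f \<theta> = c * \<theta> + d) \<and>
        (\<exists>c d. \<forall>\<theta>\<ge>last xs. f \<theta> = c * \<theta> + d))"

end

theory Submission
  imports Defs
begin

definition lin :: "'v set \<Rightarrow> ('v \<Rightarrow> real) \<Rightarrow> ('v \<Rightarrow> real) \<Rightarrow> real" where
  "lin V a x = (\<Sum>j\<in>V. a j * x j)"

definition sat :: "'v set \<Rightarrow> (('v \<Rightarrow> real) \<times> real) set \<Rightarrow> ('v \<Rightarrow> real) \<Rightarrow> bool" where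
  "sat V C x \<longleftrightarrow> (\<forall>c\<in>C. lin V (fst c) x \<le> snd c)"

lemma lin_upd:
  assumes "finite V" "v \<in> V"
  shows "lin V a (x(v:=y)) = lin (V - {v}) a x + a v * y"
proof -
  have "lin V a (x(v:=y)) = a v * y + lin (V - {v}) a (x(v:=y))"
    unfolding lin_def using assms by (simp add: sum.remove)
  moreover have "lin (V - {v}) a (x(v:=y)) = lin (V - {v}) a x"
    unfolding lin_def by (rule sum.cong) auto
  ultimately show ?thesis by simp
qed

lemma lin_comb:
  "lin (V - W) (\<lambda>j. r * a j + s * b j) x = r * lin (V - W) a x + s * lin (V - W) b x"
  unfolding lin_def by (simp add: algebra_simps sum.distrib sum_distrib_left)

lemma fm_step:
  assumes V: "finite V" "v \<in> V" and C: "finite C"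
  shows "\<exists>C'. finite C' \<and> (\<forall>x. sat (V - {v}) C' x \<longleftrightarrow> (\<exists>y. sat V C (x(v:=y))))"
proof -
  define Z where "Z = {c\<in>C. fst c v = 0}"
  define Pp where "Pp = {c\<in>C. fst c v > 0}"
  define Nn where "Nn = {c\<in>C. fst c v < 0}"
  define comb where "comb = (\<lambda>(p::('a \<Rightarrow> real) \<times> real, q::('a \<Rightarrow> real) \<times> real).
     ((\<lambda>j. (- fst q v) * fst p j + fst p v * fst q j), (- fst q v) * snd p + fst p v * snd q))"
  define C' where "C' = Z \<union> comb ` (Pp \<times> Nn)"
  have fin: "finite Z" "finite Pp" "finite Nn" using C by (auto simp: Z_def Pp_def Nn_def)
  have "finite C'" using fin by (simp add: C'_def)
  moreover have "sat (V - {v}) C' x \<longleftrightarrow> (\<exists>y. sat V C (x(v:=y)))" for x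
  proof
    assume "\<exists>y. sat V C (x(v:=y))"
    then obtain y where y: "sat V C (x(v:=y))" by blast
    have cy: "lin (V - {v}) (fst c) x + fst c v * y \<le> snd c" if "c \<in> C" for c
      using y that lin_upd[OF V, of "fst c" x y] unfolding sat_def by auto
    show "sat (V - {v}) C' x"
      unfolding sat_def
    proof
      fix c assume "c \<in> C'"
      then consider "c \<in> Z" | p q where "p \<in> Pp" "q \<in> Nn" "c = comb (p,q)"
        unfolding C'_def by auto
      then show "lin (V - {v}) (fst c) x \<le> snd c"
      proof cases
        case 1 then show ?thesis using cy[of c] by (simp add: Z_def)
      next
        case 2
        have p: "p \<in> C" "fst p v > 0" and q: "q \<in> C" "fst q v < 0" using 2 by (auto simp: Pp_def Nn_def)
        define Lp where "Lp = lin (V - {v}) (fst p) x"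
        define Lq where "Lq = lin (V - {v}) (fst q) x"
        have h1: "(- fst q v) * (Lp + fst p v * y) \<le> (- fst q v) * snd p"
          using cy[OF p(1)] q(2) unfolding Lp_def by (intro mult_left_mono) auto
        have h2: "fst p v * (Lq + fst q v * y) \<le> fst p v * snd q"
          using cy[OF q(1)] p(2) unfolding Lq_def by (intro mult_left_mono) auto
        have e: "(- fst q v) * Lp + fst p v * Lq = (- fst q v) * (Lp + fst p v * y) + fst p v * (Lq + fst q v * y)"
          by (simp add: algebra_simps)
        have "lin (V - {v}) (fst c) x = (- fst q v) * Lp + fst p v * Lq"
          unfolding 2 comb_def Lp_def Lq_def using lin_comb[of V "{v}" "- fst q v" "fst p" "fst p v" "fst q" x] by simp
        moreover have "snd c = (- fst q v) * snd p + fst p v * snd q"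
          unfolding 2 comb_def by simp
        ultimately show ?thesis using h1 h2 e by linarith
      qed
    qed
  next
    assume s: "sat (V - {v}) C' x"
    define L where "L (c::('a \<Rightarrow> real) \<times> real) = lin (V - {v}) (fst c) x" for c
    define U where "U (c::('a \<Rightarrow> real) \<times> real) = (snd c - L c) / fst c v" for c
    have Z: "L c \<le> snd c" if "c \<in> Z" for c using s that unfolding sat_def C'_def L_def by auto
    have PN: "U q \<le> U p" if "p \<in> Pp" "q \<in> Nn" for p q
    proof -
      have cm: "lin (V - {v}) (fst (comb (p,q))) x \<le> snd (comb (p,q))"
        using s that unfolding sat_def C'_def by auto
      have p: "fst p v > 0" and q: "fst q v < 0" using that by (auto simp: Pp_def Nn_def)
      have "(- fst q v) * L p + fst p v * L q \<le> (- fst q v) * snd p + fst p v * snd q"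
        using cm lin_comb[of V "{v}" "- fst q v" "fst p" "fst p v" "fst q" x] unfolding comb_def L_def by simp
      then have "fst q v * (snd p - L p) \<le> fst p v * (snd q - L q)"
        by (simp add: algebra_simps)
      then show ?thesis unfolding U_def using p q
        by (simp add: divide_simps) (simp add: algebra_simps)
    qed
    have key: "sat V C (x(v:=y))" if yP: "\<And>p. p \<in> Pp \<Longrightarrow> y \<le> U p" and yN: "\<And>q. q \<in> Nn \<Longrightarrow> U q \<le> y" for y
      unfolding sat_def
    proof
      fix c assume c: "c \<in> C"
      have eq: "lin V (fst c) (x(v:=y)) = L c + fst c v * y"
        unfolding L_def by (rule lin_upd[OF V])
      consider "fst c v = 0" | "fst c v > 0" | "fst c v < 0" by linarith
      then show "lin V (fst c) (x(v:=y)) \<le> snd c"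
      proof cases
        case 1 then show ?thesis using Z[of c] c eq by (simp add: Z_def)
      next
        case 2
        then have "y \<le> U c" using yP[of c] c by (simp add: Pp_def)
        then show ?thesis using 2 eq unfolding U_def by (simp add: field_simps)
      next
        case 3
        then have "U c \<le> y" using yN[of c] c by (simp add: Nn_def)
        then show ?thesis using 3 eq unfolding U_def by (simp add: field_simps)
      qed
    qed
    show "\<exists>y. sat V C (x(v:=y))"
    proof (cases "Pp = {}")
      case False
      show ?thesis
        apply (rule exI[of _ "Min (U ` Pp)"], rule key)
        using False fin PN by (auto intro: Min.boundedI)
    next
      case True
      show ?thesis
      proof (cases "Nn = {}")
        case True
        show ?thesis by (rule exI[of _ 0], rule key) (use True \<open>Pp = {}\<close> in auto)
      next
        case False
        show ?thesis
          apply (rule exI[of _ "Max (U ` Nn)"], rule key)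
          using False fin \<open>Pp = {}\<close> by auto
      qed
    qed
  qed
  ultimately show ?thesis by blast
qed

lemma fm_elim:
  assumes V: "finite V" and E: "finite E" "E \<subseteq> V" and C: "finite C"
  shows "\<exists>C'. finite C' \<and> (\<forall>x. sat (V - E) C' x \<longleftrightarrow> (\<exists>y. sat V C (\<lambda>j. if j \<in> E then y j else x j)))"
  using E
proof (induction E rule: finite_induct)
  case empty
  show ?case by (rule exI[of _ C]) (simp add: C)
next
  case (insert e F)
  then obtain C1 where C1: "finite C1" "\<And>x. sat (V - F) C1 x \<longleftrightarrow> (\<exists>y. sat V C (\<lambda>j. if j \<in> F then y j else x j))"
    by auto
  have "e \<in> V - F" using insert by auto
  from fm_step[OF _ this C1(1)] V obtain C2 where
    C2: "finite C2" "\<And>x. sat (V - F - {e}) C2 x \<longleftrightarrow> (\<exists>z. sat (V - F) C1 (x(e:=z)))" by auto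
  have "sat (V - insert e F) C2 x \<longleftrightarrow> (\<exists>y. sat V C (\<lambda>j. if j \<in> insert e F then y j else x j))" for x
  proof -
    have "V - insert e F = V - F - {e}" by auto
    then have "sat (V - insert e F) C2 x \<longleftrightarrow> (\<exists>z y. sat V C (\<lambda>j. if j \<in> F then y j else (x(e:=z)) j))"
      using C2(2) C1(2) by simp
    also have "\<dots> \<longleftrightarrow> (\<exists>y. sat V C (\<lambda>j. if j \<in> insert e F then y j else x j))"
    proof
      assume "\<exists>z y. sat V C (\<lambda>j. if j \<in> F then y j else (x(e:=z)) j)"
      then obtain z y where zy: "sat V C (\<lambda>j. if j \<in> F then y j else (x(e:=z)) j)" by blast
      have "(\<lambda>j. if j \<in> F then y j else (x(e:=z)) j) = (\<lambda>j. if j \<in> insert e F then (y(e:=z)) j else x j)"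
        using insert(2) by (auto simp: fun_eq_iff)
      then show "\<exists>y. sat V C (\<lambda>j. if j \<in> insert e F then y j else x j)" using zy by metis
    next
      assume "\<exists>y. sat V C (\<lambda>j. if j \<in> insert e F then y j else x j)"
      then obtain y where y: "sat V C (\<lambda>j. if j \<in> insert e F then y j else x j)" by blast
      have "(\<lambda>j. if j \<in> insert e F then y j else x j) = (\<lambda>j. if j \<in> F then y j else (x(e:=y e)) j)"
        using insert(2) by (auto simp: fun_eq_iff)
      then show "\<exists>z y. sat V C (\<lambda>j. if j \<in> F then y j else (x(e:=z)) j)" using y by metis
    qed
    finally show ?thesis .
  qed
  then show ?case using C2(1) by blast
qed

definition aff :: "real \<times> real \<Rightarrow> real \<Rightarrow> real" where "aff p t = fst p * t + snd p"
definition GM :: "(real \<times> real) set \<Rightarrow> real \<Rightarrow> real" where "GM A t = Max ((\<lambda>p. aff p t) ` A)"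
definition cvxpl :: "(real \<Rightarrow> real) \<Rightarrow> bool" where
  "cvxpl f \<longleftrightarrow> (\<exists>A. finite A \<and> A \<noteq> {} \<and> (\<forall>t\<ge>0. f t = GM A t))"

lemma GM_ge: "finite A \<Longrightarrow> p \<in> A \<Longrightarrow> aff p t \<le> GM A t"
  unfolding GM_def by auto

lemma GM_attain: "finite A \<Longrightarrow> A \<noteq> {} \<Longrightarrow> \<exists>p\<in>A. aff p t = GM A t"
proof -
  assume "finite A" "A \<noteq> {}"
  then have "GM A t \<in> (\<lambda>p. aff p t) ` A" unfolding GM_def by (intro Max_in) auto
  then show ?thesis by force
qed

lemma GM_eqI: "finite A \<Longrightarrow> (\<And>q. q \<in> A \<Longrightarrow> aff q t \<le> y) \<Longrightarrow> p \<in> A \<Longrightarrow> aff p t = y \<Longrightarrow> GM A t = y"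
  unfolding GM_def by (rule Max_eqI) auto

lemma cvxpl_add:
  assumes "cvxpl f" "cvxpl g" shows "cvxpl (\<lambda>t. f t + g t)"
proof -
  obtain A where A: "finite A" "A \<noteq> {}" "\<forall>t\<ge>0. f t = GM A t" using assms(1) unfolding cvxpl_def by blast
  obtain B where B: "finite B" "B \<noteq> {}" "\<forall>t\<ge>0. g t = GM B t" using assms(2) unfolding cvxpl_def by blast
  define AB where "AB = (\<lambda>(p,q). (fst p + fst q, snd p + snd q)) ` (A \<times> B)"
  have fin: "finite AB" "AB \<noteq> {}" using A B by (auto simp: AB_def)
  have "GM AB t = GM A t + GM B t" for t
  proof -
    obtain p where p: "p \<in> A" "aff p t = GM A t" using GM_attain[OF A(1,2)] by blast
    obtain q where q: "q \<in> B" "aff q t = GM B t" using GM_attain[OF B(1,2)] by blast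
    show ?thesis
    proof (rule GM_eqI[OF fin(1)])
      fix r assume "r \<in> AB"
      then obtain p' q' where "p' \<in> A" "q' \<in> B" "r = (fst p' + fst q', snd p' + snd q')" unfolding AB_def by auto
      moreover have "aff p' t \<le> GM A t" "aff q' t \<le> GM B t" using GM_ge A(1) B(1) calculation by auto
      ultimately show "aff r t \<le> GM A t + GM B t" by (simp add: aff_def algebra_simps)
    next
      show "(fst p + fst q, snd p + snd q) \<in> AB" using p q unfolding AB_def by force
      show "aff (fst p + fst q, snd p + snd q) t = GM A t + GM B t" using p q by (simp add: aff_def algebra_simps)
    qed
  qed
  then show ?thesis unfolding cvxpl_def using fin A B by (intro exI[of _ AB]) auto
qed

lemma cvxpl_const: "cvxpl (\<lambda>t. c)"
  unfolding cvxpl_def by (rule exI[of _ "{(0,c)}"]) (auto simp: GM_def aff_def)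

lemma cvxpl_scale:
  assumes "cvxpl f" "r \<ge> 0" shows "cvxpl (\<lambda>t. r * f t)"
proof -
  obtain A where A: "finite A" "A \<noteq> {}" "\<forall>t\<ge>0. f t = GM A t" using assms(1) unfolding cvxpl_def by blast
  define A' where "A' = (\<lambda>p. (r * fst p, r * snd p)) ` A"
  have fin: "finite A'" "A' \<noteq> {}" using A by (auto simp: A'_def)
  have "GM A' t = r * GM A t" for t
  proof -
    obtain p where p: "p \<in> A" "aff p t = GM A t" using GM_attain[OF A(1,2)] by blast
    show ?thesis
    proof (rule GM_eqI[OF fin(1)])
      fix q assume "q \<in> A'"
      then obtain q' where "q' \<in> A" "q = (r * fst q', r * snd q')" unfolding A'_def by auto
      moreover have "aff q' t \<le> GM A t" using GM_ge A(1) calculation by auto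
      ultimately show "aff q t \<le> r * GM A t" using assms(2) mult_left_mono[of "aff q' t" "GM A t" r]
        by (simp add: aff_def algebra_simps)
    next
      show "(r * fst p, r * snd p) \<in> A'" using p unfolding A'_def by force
      show "aff (r * fst p, r * snd p) t = r * GM A t" by (subst p(2)[symmetric]) (simp add: aff_def algebra_simps)
    qed
  qed
  then show ?thesis unfolding cvxpl_def using fin A by (intro exI[of _ A']) auto
qed

lemma cvxpl_sum:
  assumes "finite K" "\<forall>k\<in>K. cvxpl (f k)" shows "cvxpl (\<lambda>t. \<Sum>k\<in>K. f k t)"
  using assms
proof (induction K rule: finite_induct)
  case empty then show ?case using cvxpl_const[of 0] by simp
next
  case (insert k K)
  then show ?case using cvxpl_add[of "f k" "\<lambda>t. \<Sum>k\<in>K. f k t"] by simp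
qed

lemma GM_continuous: "finite A \<Longrightarrow> A \<noteq> {} \<Longrightarrow> continuous_on S (GM A)"
proof (induction A rule: finite_ne_induct)
  case (singleton x)
  then show ?case unfolding GM_def aff_def by (simp add: continuous_intros)
next
  case (insert x F)
  have "GM (insert x F) = (\<lambda>t. max (aff x t) (GM F t))"
    unfolding GM_def using insert by (auto simp: fun_eq_iff Max_insert)
  then show ?case using insert unfolding aff_def by (auto intro!: continuous_intros)
qed

lemma cvxpl_continuous: "cvxpl f \<Longrightarrow> continuous_on {0..} f"
proof -
  assume "cvxpl f"
  then obtain A where A: "finite A" "A \<noteq> {}" "\<forall>t\<ge>0. f t = GM A t" unfolding cvxpl_def by blast
  have "continuous_on {0..} (GM A)" using GM_continuous A by blast
  moreover have "continuous_on {0..} f \<longleftrightarrow> continuous_on {0..} (GM A)"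
    by (rule continuous_on_cong) (auto simp: A(3))
  ultimately show ?thesis by simp
qed

lemma sign_cross:
  fixes k e u m v th :: real
  assumes "u < m" "m < v" "u \<le> th" "th \<le> v" "k * m + e \<ge> 0" "k * th + e < 0"
  shows "k \<noteq> 0 \<and> u < - e / k \<and> - e / k < v"
proof -
  have k: "k \<noteq> 0" using assms by auto
  consider "k > 0" | "k < 0" using k by linarith
  then show ?thesis
  proof cases
    case 1
    have "th < - e / k" using 1 assms(6) by (simp add: field_simps)
    moreover have "- e / k \<le> m" using 1 assms(5) by (simp add: field_simps)
    ultimately show ?thesis using k assms by linarith
  next
    case 2
    have "th > - e / k" using 2 assms(6) by (simp add: field_simps)
    moreover have "- e / k \<ge> m" using 2 assms(5) by (simp add: field_simps)
    ultimately show ?thesis using k assms by linarith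
  qed
qed

definition crossB :: "(real \<times> real) set \<Rightarrow> real set" where
  "crossB A = insert 0 {z. 0 < z \<and> (\<exists>p\<in>A. \<exists>q\<in>A. fst p \<noteq> fst q \<and> z = - (snd p - snd q) / (fst p - fst q))}"

lemma crossB_finite: "finite A \<Longrightarrow> finite (crossB A)"
proof -
  assume A: "finite A"
  have "{z. 0 < z \<and> (\<exists>p\<in>A. \<exists>q\<in>A. fst p \<noteq> fst q \<and> z = - (snd p - snd q) / (fst p - fst q))}
     \<subseteq> (\<lambda>(p,q). - (snd p - snd q) / (fst p - fst q)) ` (A \<times> A)" by force
  then show ?thesis unfolding crossB_def using A by (auto intro: finite_subset)
qed

lemma GM_piece:
  assumes A: "finite A" and p: "p \<in> A" and pm: "\<And>q. q \<in> A \<Longrightarrow> aff q m \<le> aff p m"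
    and um: "u < m" "m < v" and u0: "0 \<le> u" and th: "u \<le> th" "th \<le> v"
    and gap: "\<And>z. z \<in> crossB A \<Longrightarrow> \<not> (u < z \<and> z < v)"
  shows "GM A th = aff p th"
proof (rule GM_eqI[OF A _ p refl])
  fix q assume q: "q \<in> A"
  show "aff q th \<le> aff p th"
  proof (rule ccontr)
    assume "\<not> aff q th \<le> aff p th"
    then have "(fst p - fst q) * th + (snd p - snd q) < 0" by (simp add: aff_def algebra_simps)
    moreover have "(fst p - fst q) * m + (snd p - snd q) \<ge> 0" using pm[OF q] by (simp add: aff_def algebra_simps)
    ultimately have c: "fst p - fst q \<noteq> 0 \<and> u < - (snd p - snd q) / (fst p - fst q) \<and> - (snd p - snd q) / (fst p - fst q) < v"
      using sign_cross[OF um th] by blast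
    then have "- (snd p - snd q) / (fst p - fst q) \<in> crossB A"
      unfolding crossB_def using p q u0 by auto
    then show False using gap c by blast
  qed
qed

lemma pl_from_B:
  assumes B: "finite B" "0 \<in> B" "\<forall>z\<in>B. 0 \<le> z"
    and gaps: "\<And>u v. u \<in> B \<Longrightarrow> v \<in> B \<Longrightarrow> u < v \<Longrightarrow> (\<forall>z\<in>B. \<not> (u < z \<and> z < v)) \<Longrightarrow>
       \<exists>c d. \<forall>t\<in>{u..v}. f t = c * t + d"
    and tail: "\<And>u. u \<in> B \<Longrightarrow> (\<forall>z\<in>B. z \<le> u) \<Longrightarrow> \<exists>c d. \<forall>t\<ge>u. f t = c * t + d"
  shows "piecewise_linear_nonneg f"
proof -
  define xs where "xs = sorted_list_of_set B"
  have set: "set xs = B" using B by (simp add: xs_def)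
  have ne: "xs \<noteq> []" using set B by auto
  have ss: "sorted_wrt (<) xs" unfolding xs_def by (rule strict_sorted_list_of_set)
  have so: "sorted xs" unfolding xs_def by simp
  have "Min B = 0" using B by (intro Min_eqI) auto
  moreover have "B \<noteq> {}" using B by auto
  ultimately have x0: "xs ! 0 = 0" unfolding xs_def using sorted_list_of_set_nonempty[of B] B by auto
  have seg: "\<exists>c d. \<forall>t\<in>{xs ! j .. xs ! (j+1)}. f t = c * t + d" if j: "j < length xs - 1" for j
  proof (rule gaps)
    show "xs ! j \<in> B" "xs ! (j+1) \<in> B" using j set by auto
    show "xs ! j < xs ! (j+1)" using ss j by (simp add: sorted_wrt_iff_nth_less)
    show "\<forall>z\<in>B. \<not> (xs ! j < z \<and> z < xs ! (j + 1))"
    proof (intro ballI notI)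
      fix z assume "z \<in> B" "xs ! j < z \<and> z < xs ! (j + 1)"
      then obtain k where k: "k < length xs" "xs ! k = z" using set by (auto simp: in_set_conv_nth)
      show False
      proof (cases "k \<le> j")
        case True then have "xs ! k \<le> xs ! j" using sorted_nth_mono[OF so] j by auto
        then show False using k \<open>xs ! j < z \<and> z < xs ! (j + 1)\<close> by auto
      next
        case False then have "xs ! (j+1) \<le> xs ! k" using sorted_nth_mono[OF so] k by auto
        then show False using k \<open>xs ! j < z \<and> z < xs ! (j + 1)\<close> by auto
      qed
    qed
  qed
  have "\<exists>c d. \<forall>t\<ge>last xs. f t = c * t + d"
  proof (rule tail)
    show "last xs \<in> B" using ne set by auto
    show "\<forall>z\<in>B. z \<le> last xs"
    proof
      fix z assume "z \<in> B"
      then obtain k where k: "k < length xs" "xs ! k = z" using set by (auto simp: in_set_conv_nth)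
      then show "z \<le> last xs" using sorted_nth_mono[OF so, of k "length xs - 1"] ne by (auto simp: last_conv_nth)
    qed
  qed
  then show ?thesis unfolding piecewise_linear_nonneg_def using ne x0 ss seg by blast
qed

lemma cvxpl_pl:
  assumes "cvxpl f" shows "piecewise_linear_nonneg f"
proof -
  obtain A where A: "finite A" "A \<noteq> {}" "\<forall>t\<ge>0. f t = GM A t" using assms unfolding cvxpl_def by blast
  have maxat: "\<exists>p\<in>A. \<forall>q\<in>A. aff q m \<le> aff p m" for m
  proof -
    obtain p where "p \<in> A" "aff p m = GM A m" using GM_attain[OF A(1,2)] by blast
    then show ?thesis using GM_ge[OF A(1)] by metis
  qed
  show ?thesis
  proof (rule pl_from_B[of "crossB A"])
    show "finite (crossB A)" using crossB_finite A by blast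
    show "0 \<in> crossB A" by (simp add: crossB_def)
    show "\<forall>z\<in>crossB A. 0 \<le> z" by (auto simp: crossB_def)
  next
    fix u v assume u: "u \<in> crossB A" and v: "v \<in> crossB A" and uv: "u < v"
      and g: "\<forall>z\<in>crossB A. \<not> (u < z \<and> z < v)"
    have u0: "0 \<le> u" using u by (auto simp: crossB_def)
    define m where "m = (u + v) / 2"
    have um: "u < m" "m < v" using uv by (auto simp: m_def)
    obtain p where p: "p \<in> A" "\<forall>q\<in>A. aff q m \<le> aff p m" using maxat by blast
    have "\<forall>t\<in>{u..v}. f t = fst p * t + snd p"
    proof
      fix t assume t: "t \<in> {u..v}"
      then have "GM A t = aff p t" using GM_piece[OF A(1) p(1) _ um u0, of t] p(2) g by auto
      then show "f t = fst p * t + snd p" using A(3) t u0 by (simp add: aff_def)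
    qed
    then show "\<exists>c d. \<forall>t\<in>{u..v}. f t = c * t + d" by blast
  next
    fix u assume u: "u \<in> crossB A" and g: "\<forall>z\<in>crossB A. z \<le> u"
    have u0: "0 \<le> u" using u by (auto simp: crossB_def)
    define m where "m = u + 1"
    obtain p where p: "p \<in> A" "\<forall>q\<in>A. aff q m \<le> aff p m" using maxat by blast
    have "\<forall>t\<ge>u. f t = fst p * t + snd p"
    proof (intro allI impI)
      fix t assume t: "t \<ge> u"
      have "GM A t = aff p t"
        using GM_piece[OF A(1) p(1) _ _ _ u0 t, of m "max t m + 1"] p(2) g by (force simp: m_def)
      then show "f t = fst p * t + snd p" using A(3) t u0 by (simp add: aff_def)
    qed
    then show "\<exists>c d. \<forall>t\<ge>u. f t = c * t + d" by blast
  qed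
qed

lemma mono_deriv:
  fixes f :: "real \<Rightarrow> real"
  assumes mono: "\<forall>t1 t2. 0 \<le> t1 \<longrightarrow> t1 \<le> t2 \<longrightarrow> f t2 \<le> f t1"
    and t: "t > 0" and D: "(f has_real_derivative D) (at t)"
  shows "- D \<ge> 0"
proof (rule ccontr)
  assume "\<not> - D \<ge> 0"
  then have "D > 0" by simp
  from DERIV_pos_inc_right[OF D this] obtain d where d: "d > 0" "\<forall>h>0. h < d \<longrightarrow> f t < f (t + h)" by blast
  have "f t < f (t + d/2)" using d by auto
  moreover have "f (t + d/2) \<le> f t" using mono t d by auto
  ultimately show False by simp
qed

lemma value_cvxpl:
  fixes X :: "real \<Rightarrow> real set" and K :: "(real \<times> real \<times> real) set" and L :: real
  assumes K: "finite K"
    and Q: "\<And>th w. (\<forall>k\<in>K. fst k * th + fst (snd k) * w \<le> snd (snd k)) \<longleftrightarrow> (\<exists>s\<in>X th. s \<le> w)"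
    and ne: "\<And>th. th \<ge> 0 \<Longrightarrow> X th \<noteq> {}"
    and lb: "\<And>th s. th \<ge> 0 \<Longrightarrow> s \<in> X th \<Longrightarrow> L \<le> s"
  shows "cvxpl (\<lambda>th. Inf (X th))"
proof -
  define a0 where "a0 k = fst k" for k :: "real \<times> real \<times> real"
  define a1 where "a1 k = fst (snd k)" for k :: "real \<times> real \<times> real"
  define b where "b k = snd (snd k)" for k :: "real \<times> real \<times> real"
  have Q': "(\<forall>k\<in>K. a0 k * th + a1 k * w \<le> b k) \<longleftrightarrow> (\<exists>s\<in>X th. s \<le> w)" for th w
    using Q unfolding a0_def a1_def b_def by blast
  define Lo where "Lo = {k\<in>K. a1 k < 0}"
  have finLo: "finite Lo" using K by (simp add: Lo_def)
  have Lone: "Lo \<noteq> {}"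
  proof
    assume Lo0: "Lo = {}"
    obtain s0 where s0: "s0 \<in> X 0" using ne[of 0] by auto
    have c0: "\<forall>k\<in>K. a0 k * 0 + a1 k * s0 \<le> b k" using Q'[of 0 s0] s0 by auto
    define w where "w = min s0 (L - 1)"
    have "\<forall>k\<in>K. a0 k * 0 + a1 k * w \<le> b k"
    proof
      fix k assume k: "k \<in> K"
      then have "\<not> a1 k < 0" using Lo0 unfolding Lo_def by blast
      then have "a1 k \<ge> 0" by simp
      then have "a1 k * w \<le> a1 k * s0" by (intro mult_left_mono) (auto simp: w_def)
      then show "a0 k * 0 + a1 k * w \<le> b k" using c0 k by auto
    qed
    then obtain s where "s \<in> X 0" "s \<le> w" using Q' by blast
    then show False using lb[of 0 s] by (auto simp: w_def)
  qed
  define A where "A = (\<lambda>k. (- a0 k / a1 k, b k / a1 k)) ` Lo"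
  have finA: "finite A" "A \<noteq> {}" using finLo Lone by (auto simp: A_def)
  have affk: "aff (- a0 k / a1 k, b k / a1 k) th = (b k - a0 k * th) / a1 k" if "k \<in> Lo" for k th
    using that unfolding Lo_def aff_def by (auto simp: field_simps)
  have "Inf (X th) = GM A th" if th: "th \<ge> 0" for th
  proof -
    obtain s0 where s0: "s0 \<in> X th" using ne[OF th] by auto
    have con: "\<forall>k\<in>K. a0 k * th + a1 k * s \<le> b k" if "s \<in> X th" for s
      using Q'[of th s] that by auto
    have lower: "GM A th \<le> s" if s: "s \<in> X th" for s
    proof -
      obtain p where p: "p \<in> A" "aff p th = GM A th" using GM_attain[OF finA] by blast
      then obtain k where k: "k \<in> Lo" "p = (- a0 k / a1 k, b k / a1 k)" unfolding A_def by auto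
      have "a1 k < 0" "k \<in> K" using k unfolding Lo_def by auto
      moreover have "a0 k * th + a1 k * s \<le> b k" using con[OF s] \<open>k \<in> K\<close> by auto
      ultimately have "(b k - a0 k * th) / a1 k \<le> s" by (simp add: field_simps)
      then show ?thesis using p k affk by simp
    qed
    define M where "M = GM A th"
    have "\<forall>k\<in>K. a0 k * th + a1 k * M \<le> b k"
    proof
      fix k assume k: "k \<in> K"
      consider "a1 k < 0" | "a1 k = 0" | "a1 k > 0" by linarith
      then show "a0 k * th + a1 k * M \<le> b k"
      proof cases
        case 1
        then have kL: "k \<in> Lo" using k by (simp add: Lo_def)
        then have "(- a0 k / a1 k, b k / a1 k) \<in> A" by (simp add: A_def)
        then have "(b k - a0 k * th) / a1 k \<le> M" using GM_ge[OF finA(1)] affk[OF kL] unfolding M_def by metis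
        then show ?thesis using 1 by (simp add: field_simps)
      next
        case 2 then show ?thesis using con[OF s0] k by auto
      next
        case 3
        have "M \<le> s0" using lower[OF s0] by (simp add: M_def)
        then have "a1 k * M \<le> a1 k * s0" using 3 by (intro mult_left_mono) auto
        then show ?thesis using con[OF s0] k by auto
      qed
    qed
    then obtain s where s: "s \<in> X th" "s \<le> M" using Q' by blast
    then have "s = M" using lower[OF s(1)] by (simp add: M_def)
    then show ?thesis using s lower unfolding M_def by (intro cInf_eq_minimum) auto
  qed
  then show ?thesis unfolding cvxpl_def using finA by blast
qed

definition unitv :: "'v \<Rightarrow> 'v \<Rightarrow> real" where "unitv v z = (if z = v then 1 else 0)"

lemma lin_plus: "lin V (\<lambda>z. a z + b z) x = lin V a x + lin V b x"
  unfolding lin_def by (simp add: algebra_simps sum.distrib)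
lemma lin_minus: "lin V (\<lambda>z. a z - b z) x = lin V a x - lin V b x"
  unfolding lin_def by (simp add: algebra_simps sum_subtractf)
lemma lin_uminus: "lin V (\<lambda>z. - a z) x = - lin V a x"
  unfolding lin_def by (simp add: sum_negf)
lemma lin_smult: "lin V (\<lambda>z. c * a z) x = c * lin V a x"
  unfolding lin_def by (simp add: algebra_simps sum_distrib_left)
lemma lin_sum: "lin V (\<lambda>z. \<Sum>k\<in>K. a k z) x = (\<Sum>k\<in>K. lin V (a k) x)"
  unfolding lin_def by (simp add: sum_distrib_right sum.swap[of _ V])
lemma lin_unitv: "finite V \<Longrightarrow> v \<in> V \<Longrightarrow> lin V (unitv v) x = x v"
proof -
  assume "finite V" "v \<in> V"
  have "(\<Sum>j\<in>V. unitv v j * x j) = (\<Sum>j\<in>V. if v = j then x j else 0)"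
    by (rule sum.cong) (auto simp: unitv_def)
  also have "\<dots> = x v" using \<open>finite V\<close> \<open>v \<in> V\<close> by (simp add: sum.delta)
  finally show ?thesis unfolding lin_def .
qed

lemma feasible_exists:
  assumes "\<forall>i\<in>{1..Ns}. 0 \<le> S0 i" "\<forall>i\<in>{1..Ns}. S0 i \<le> Sb i" "\<forall>i\<in>{1..Ns}. 0 \<le> xb i"
  shows "feasible_P2 Ns T S0 Sb xb p (\<lambda>i t. S0 i)"
  using assms unfolding feasible_P2_def pplus_def pminus_def by force

lemma obj_lb:
  assumes "feasible_P2 Ns T S0 Sb xb p S"
  shows "- (\<Sum>t=1..T. pminus (p t)) \<le> obj_P2 Ns T S"
proof -
  have "- pminus (p t) \<le> min 0 (\<Sum>i=1..Ns. S i t - S i (t - 1))" if "t \<in> {1..T}" for t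
    using assms that unfolding feasible_P2_def pminus_def by auto
  then have "(\<Sum>t=1..T. - pminus (p t)) \<le> obj_P2 Ns T S"
    unfolding obj_P2_def by (intro sum_mono) auto
  then show ?thesis by (simp add: sum_negf)
qed

lemma feasible_mono:
  assumes "\<forall>i\<in>{1..Ns}. Sb1 i \<le> Sb2 i" "\<forall>i\<in>{1..Ns}. xb1 i \<le> xb2 i"
    and "feasible_P2 Ns T S0 Sb1 xb1 p S"
  shows "feasible_P2 Ns T S0 Sb2 xb2 p S"
  using assms unfolding feasible_P2_def by (meson order_trans neg_le_iff_le)

lemma obj_lin:
  assumes "feasible_P2 Ns T S0 Sb xb p S"
  shows "obj_P2 Ns T S = (\<Sum>t\<in>{t\<in>{1..T}. p t < 0}. \<Sum>i=1..Ns. S i t - S i (t - 1))"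
proof -
  have "obj_P2 Ns T S = (\<Sum>t=1..T. if p t < 0 then (\<Sum>i=1..Ns. S i t - S i (t - 1)) else 0)"
    unfolding obj_P2_def
  proof (rule sum.cong[OF refl])
    fix t assume t: "t \<in> {1..T}"
    then have "- pminus (p t) \<le> (\<Sum>i=1..Ns. S i t - S i (t - 1))" "(\<Sum>i=1..Ns. S i t - S i (t - 1)) \<le> pplus (p t)"
      using assms unfolding feasible_P2_def by auto
    then show "min 0 (\<Sum>i=1..Ns. S i t - S i (t - 1)) = (if p t < 0 then (\<Sum>i=1..Ns. S i t - S i (t - 1)) else 0)"
      unfolding pplus_def pminus_def by auto
  qed
  also have "\<dots> = (\<Sum>t\<in>{t\<in>{1..T}. p t < 0}. \<Sum>i=1..Ns. S i t - S i (t - 1))"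
    by (subst sum.inter_filter) auto
  finally show ?thesis .
qed

lemma feasible_cong:
  assumes "\<forall>i\<in>{1..Ns}. \<forall>t\<le>T. S i t = S' i t"
  shows "feasible_P2 Ns T S0 Sb xb p S \<longleftrightarrow> feasible_P2 Ns T S0 Sb xb p S'"
proof -
  have e: "S i t = S' i t" "S i (t - 1) = S' i (t - 1)" if "i \<in> {1..Ns}" "t \<in> {1..T}" for i t
    using assms that by auto
  have e0: "S i 0 = S' i 0" if "i \<in> {1..Ns}" for i using assms that by auto
  have s: "(\<Sum>i=1..Ns. S i t - S i (t - 1)) = (\<Sum>i=1..Ns. S' i t - S' i (t - 1))" if "t \<in> {1..T}" for t
    using e that by (intro sum.cong) auto
  show ?thesis unfolding feasible_P2_def using e e0 s by auto
qed

definition sysC :: "nat \<Rightarrow> nat \<Rightarrow> (nat\<Rightarrow>real) \<Rightarrow> (nat\<Rightarrow>real) \<Rightarrow> (nat\<Rightarrow>real) \<Rightarrow> (nat\<Rightarrow>real) \<Rightarrow> (nat\<Rightarrow>real) \<Rightarrow> (nat\<Rightarrow>real)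
   \<Rightarrow> (((nat \<times> nat) \<Rightarrow> real) \<times> real) set" where
"sysC Ns T S0 Sbar xbar al be p =
 (\<Union>i\<in>{1..Ns}. {(unitv (i,0), S0 i), (\<lambda>z. - unitv (i,0) z, - S0 i)}) \<union>
 (\<Union>i\<in>{1..Ns}. \<Union>t\<in>{1..T}. {(\<lambda>z. - unitv (i,t) z, 0),
   (\<lambda>z. unitv (i,t) z - al i * unitv (0,0) z, Sbar i),
   (\<lambda>z. unitv (i,t) z - unitv (i,t-1) z - be i * unitv (0,0) z, xbar i),
   (\<lambda>z. unitv (i,t-1) z - unitv (i,t) z - be i * unitv (0,0) z, xbar i),
   (\<lambda>z. unitv (i,t) z - unitv (i,t-1) z, pplus (p t)),
   (\<lambda>z. unitv (i,t-1) z - unitv (i,t) z, pminus (p t))}) \<union>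
 (\<Union>t\<in>{1..T}. {(\<lambda>z. \<Sum>i=1..Ns. unitv (i,t) z - unitv (i,t-1) z, pplus (p t)),
              (\<lambda>z. \<Sum>i=1..Ns. unitv (i,t-1) z - unitv (i,t) z, pminus (p t))}) \<union>
 {(\<lambda>z. (\<Sum>t\<in>{t\<in>{1..T}. p t < 0}. \<Sum>i=1..Ns. unitv (i,t) z - unitv (i,t-1) z) - unitv (0,1) z, 0)}"

lemma sysC_finite: "finite (sysC Ns T S0 Sbar xbar al be p)"
  unfolding sysC_def by simp

lemma sysC_sat:
  fixes x :: "nat \<times> nat \<Rightarrow> real" and Ns T :: nat
  defines "V \<equiv> insert (0,0) (insert (0,1) ({1..Ns} \<times> {0..T}))"
  shows "sat V (sysC Ns T S0 Sbar xbar al be p) x \<longleftrightarrow>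
    feasible_P2 Ns T S0 (\<lambda>j. Sbar j + al j * x (0,0)) (\<lambda>j. xbar j + be j * x (0,0)) p (\<lambda>i t. x (i,t)) \<and>
    (\<Sum>t\<in>{t\<in>{1..T}. p t < 0}. \<Sum>i=1..Ns. x (i,t) - x (i,t-1)) \<le> x (0,1)"
proof -
  have fV: "finite V" by (simp add: V_def)
  have m: "(0,0) \<in> V" "(0,1) \<in> V" "\<And>i t. i \<in> {1..Ns} \<Longrightarrow> t \<le> T \<Longrightarrow> (i,t) \<in> V" by (auto simp: V_def)
  have hd: "lin V (\<lambda>z. \<Sum>i\<in>A. unitv (f i) z - unitv (g i) z) x = (\<Sum>i\<in>A. x (f i) - x (g i))"
    if "\<forall>i\<in>A. f i \<in> V \<and> g i \<in> V" for A f g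
  proof -
    have "lin V (\<lambda>z. \<Sum>i\<in>A. unitv (f i) z - unitv (g i) z) x = (\<Sum>i\<in>A. lin V (unitv (f i)) x - lin V (unitv (g i)) x)"
      by (simp only: lin_sum lin_minus)
    also have "\<dots> = (\<Sum>i\<in>A. x (f i) - x (g i))"
      by (rule sum.cong) (use that in \<open>auto simp: lin_unitv fV\<close>)
    finally show ?thesis .
  qed
  have d1: "\<And>t. t \<in> {1..T} \<Longrightarrow> lin V (\<lambda>z. \<Sum>i=1..Ns. unitv (i,t) z - unitv (i,t-1) z) x = (\<Sum>i=1..Ns. x (i,t) - x (i,t-1))"
    by (rule hd) (auto simp: m)
  have d2: "\<And>t. t \<in> {1..T} \<Longrightarrow> lin V (\<lambda>z. \<Sum>i=1..Ns. unitv (i,t-1) z - unitv (i,t) z) x = - (\<Sum>i=1..Ns. x (i,t) - x (i,t-1))"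
  proof -
    fix t assume "t \<in> {1..T}"
    then have "lin V (\<lambda>z. \<Sum>i=1..Ns. unitv (i,t-1) z - unitv (i,t) z) x = (\<Sum>i=1..Ns. x (i,t-1) - x (i,t))"
      by (intro hd) (auto simp: m)
    then show "lin V (\<lambda>z. \<Sum>i=1..Ns. unitv (i,t-1) z - unitv (i,t) z) x = - (\<Sum>i=1..Ns. x (i,t) - x (i,t-1))"
      by (simp add: sum_subtractf)
  qed
  have d3: "lin V (\<lambda>z. (\<Sum>t\<in>{t\<in>{1..T}. p t < 0}. \<Sum>i=1..Ns. unitv (i,t) z - unitv (i,t-1) z) - unitv (0,1) z) x
     = (\<Sum>t\<in>{t\<in>{1..T}. p t < 0}. \<Sum>i=1..Ns. x (i,t) - x (i,t-1)) - x (0,1)"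
  proof -
    have "lin V (\<lambda>z. (\<Sum>t\<in>{t\<in>{1..T}. p t < 0}. \<Sum>i=1..Ns. unitv (i,t) z - unitv (i,t-1) z) - unitv (0,1) z) x
      = (\<Sum>t\<in>{t\<in>{1..T}. p t < 0}. lin V (\<lambda>z. \<Sum>i=1..Ns. unitv (i,t) z - unitv (i,t-1) z) x) - x (0,1)"
      by (simp only: lin_minus lin_sum lin_unitv[OF fV m(2)])
    also have "\<dots> = (\<Sum>t\<in>{t\<in>{1..T}. p t < 0}. \<Sum>i=1..Ns. x (i,t) - x (i,t-1)) - x (0,1)"
      by (subst sum.cong[OF refl d1]) auto
    finally show ?thesis .
  qed
  have l: "\<And>i t. i \<in> {1..Ns} \<Longrightarrow> t \<in> {1..T} \<Longrightarrow> 
      lin V (\<lambda>z. - unitv (i,t) z) x = - x (i,t) \<and>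
      lin V (\<lambda>z. unitv (i,t) z - al i * unitv (0,0) z) x = x (i,t) - al i * x (0,0) \<and>
      lin V (\<lambda>z. unitv (i,t) z - unitv (i,t-1) z - be i * unitv (0,0) z) x = x (i,t) - x (i,t-1) - be i * x (0,0) \<and>
      lin V (\<lambda>z. unitv (i,t-1) z - unitv (i,t) z - be i * unitv (0,0) z) x = x (i,t-1) - x (i,t) - be i * x (0,0) \<and>
      lin V (\<lambda>z. unitv (i,t) z - unitv (i,t-1) z) x = x (i,t) - x (i,t-1) \<and>
      lin V (\<lambda>z. unitv (i,t-1) z - unitv (i,t) z) x = x (i,t-1) - x (i,t)"
  proof -
    fix i t assume it: "i \<in> {1..Ns}" "t \<in> {1..T}"
    have "(i,t) \<in> V" "(i,t-1) \<in> V" using it by (auto intro!: m(3))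
    then show "?thesis i t" by (simp add: lin_minus lin_uminus lin_smult lin_unitv fV m)
  qed
  have l0: "\<And>i. i \<in> {1..Ns} \<Longrightarrow> lin V (unitv (i,0)) x = x (i,0) \<and> lin V (\<lambda>z. - unitv (i,0) z) x = - x (i,0)"
    by (simp add: lin_uminus lin_unitv fV m)
  have B: "sat V (sysC Ns T S0 Sbar xbar al be p) x \<longleftrightarrow>
    (\<forall>i\<in>{1..Ns}. lin V (unitv (i,0)) x \<le> S0 i \<and> lin V (\<lambda>z. - unitv (i,0) z) x \<le> - S0 i) \<and>
    (\<forall>i\<in>{1..Ns}. \<forall>t\<in>{1..T}. lin V (\<lambda>z. - unitv (i,t) z) x \<le> 0 \<and>
      lin V (\<lambda>z. unitv (i,t) z - al i * unitv (0,0) z) x \<le> Sbar i \<and>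
      lin V (\<lambda>z. unitv (i,t) z - unitv (i,t-1) z - be i * unitv (0,0) z) x \<le> xbar i \<and>
      lin V (\<lambda>z. unitv (i,t-1) z - unitv (i,t) z - be i * unitv (0,0) z) x \<le> xbar i \<and>
      lin V (\<lambda>z. unitv (i,t) z - unitv (i,t-1) z) x \<le> pplus (p t) \<and>
      lin V (\<lambda>z. unitv (i,t-1) z - unitv (i,t) z) x \<le> pminus (p t)) \<and>
    (\<forall>t\<in>{1..T}. lin V (\<lambda>z. \<Sum>i=1..Ns. unitv (i,t) z - unitv (i,t-1) z) x \<le> pplus (p t) \<and>
      lin V (\<lambda>z. \<Sum>i=1..Ns. unitv (i,t-1) z - unitv (i,t) z) x \<le> pminus (p t)) \<and>
    lin V (\<lambda>z. (\<Sum>t\<in>{t\<in>{1..T}. p t < 0}. \<Sum>i=1..Ns. unitv (i,t) z - unitv (i,t-1) z) - unitv (0,1) z) x \<le> 0"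
    unfolding sat_def sysC_def
    by (simp only: ball_Un ball_UN ball_simps fst_conv snd_conv conj_assoc simp_thms)
  have e0: "(\<forall>i\<in>{1..Ns}. lin V (unitv (i,0)) x \<le> S0 i \<and> lin V (\<lambda>z. - unitv (i,0) z) x \<le> - S0 i)
     \<longleftrightarrow> (\<forall>i\<in>{1..Ns}. x (i,0) = S0 i)"
    using l0 by force
  have e1: "(\<forall>i\<in>{1..Ns}. \<forall>t\<in>{1..T}. lin V (\<lambda>z. - unitv (i,t) z) x \<le> 0 \<and>
      lin V (\<lambda>z. unitv (i,t) z - al i * unitv (0,0) z) x \<le> Sbar i \<and>
      lin V (\<lambda>z. unitv (i,t) z - unitv (i,t-1) z - be i * unitv (0,0) z) x \<le> xbar i \<and>
      lin V (\<lambda>z. unitv (i,t-1) z - unitv (i,t) z - be i * unitv (0,0) z) x \<le> xbar i \<and>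
      lin V (\<lambda>z. unitv (i,t) z - unitv (i,t-1) z) x \<le> pplus (p t) \<and>
      lin V (\<lambda>z. unitv (i,t-1) z - unitv (i,t) z) x \<le> pminus (p t)) \<longleftrightarrow>
    (\<forall>i\<in>{1..Ns}. \<forall>t\<in>{1..T}. 0 \<le> x (i,t) \<and> x (i,t) \<le> Sbar i + al i * x (0,0) \<and>
        - (xbar i + be i * x (0,0)) \<le> x (i,t) - x (i,t-1) \<and> x (i,t) - x (i,t-1) \<le> xbar i + be i * x (0,0) \<and>
        - pminus (p t) \<le> x (i,t) - x (i,t-1) \<and> x (i,t) - x (i,t-1) \<le> pplus (p t))"
  proof (intro ball_cong refl)
    fix i t assume "i \<in> {1..Ns}" "t \<in> {1..T}"
    then show "(lin V (\<lambda>z. - unitv (i,t) z) x \<le> 0 \<and>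
      lin V (\<lambda>z. unitv (i,t) z - al i * unitv (0,0) z) x \<le> Sbar i \<and>
      lin V (\<lambda>z. unitv (i,t) z - unitv (i,t-1) z - be i * unitv (0,0) z) x \<le> xbar i \<and>
      lin V (\<lambda>z. unitv (i,t-1) z - unitv (i,t) z - be i * unitv (0,0) z) x \<le> xbar i \<and>
      lin V (\<lambda>z. unitv (i,t) z - unitv (i,t-1) z) x \<le> pplus (p t) \<and>
      lin V (\<lambda>z. unitv (i,t-1) z - unitv (i,t) z) x \<le> pminus (p t)) \<longleftrightarrow>
      (0 \<le> x (i,t) \<and> x (i,t) \<le> Sbar i + al i * x (0,0) \<and>
        - (xbar i + be i * x (0,0)) \<le> x (i,t) - x (i,t-1) \<and> x (i,t) - x (i,t-1) \<le> xbar i + be i * x (0,0) \<and>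
        - pminus (p t) \<le> x (i,t) - x (i,t-1) \<and> x (i,t) - x (i,t-1) \<le> pplus (p t))"
      using l[of i t] by (simp only:) linarith
  qed
  have e2: "(\<forall>t\<in>{1..T}. lin V (\<lambda>z. \<Sum>i=1..Ns. unitv (i,t) z - unitv (i,t-1) z) x \<le> pplus (p t) \<and>
      lin V (\<lambda>z. \<Sum>i=1..Ns. unitv (i,t-1) z - unitv (i,t) z) x \<le> pminus (p t)) \<longleftrightarrow>
    (\<forall>t\<in>{1..T}. - pminus (p t) \<le> (\<Sum>i=1..Ns. x (i,t) - x (i,t-1)) \<and> (\<Sum>i=1..Ns. x (i,t) - x (i,t-1)) \<le> pplus (p t))"
  proof (intro ball_cong refl)
    fix t assume t: "t \<in> {1..T}"
    show "(lin V (\<lambda>z. \<Sum>i=1..Ns. unitv (i,t) z - unitv (i,t-1) z) x \<le> pplus (p t) \<and>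
      lin V (\<lambda>z. \<Sum>i=1..Ns. unitv (i,t-1) z - unitv (i,t) z) x \<le> pminus (p t)) \<longleftrightarrow>
      (- pminus (p t) \<le> (\<Sum>i=1..Ns. x (i,t) - x (i,t-1)) \<and> (\<Sum>i=1..Ns. x (i,t) - x (i,t-1)) \<le> pplus (p t))"
      using d1[OF t] d2[OF t] by (simp only:) linarith
  qed
  have e3: "lin V (\<lambda>z. (\<Sum>t\<in>{t\<in>{1..T}. p t < 0}. \<Sum>i=1..Ns. unitv (i,t) z - unitv (i,t-1) z) - unitv (0,1) z) x \<le> 0
     \<longleftrightarrow> (\<Sum>t\<in>{t\<in>{1..T}. p t < 0}. \<Sum>i=1..Ns. x (i,t) - x (i,t-1)) \<le> x (0,1)"
    using d3 by (simp only:) linarith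
  show ?thesis unfolding B e0 e1 e2 e3 feasible_P2_def by (simp only: conj_assoc)
qed

lemma profile:
  fixes Ns T :: nat and S0 Sbar xbar al be p :: "nat \<Rightarrow> real"
  assumes S0: "\<forall>i\<in>{1..Ns}. 0 \<le> S0 i" and Sb: "\<forall>i\<in>{1..Ns}. S0 i \<le> Sbar i"
    and xb: "\<forall>i\<in>{1..Ns}. 0 \<le> xbar i" and al: "\<forall>i\<in>{1..Ns}. 0 \<le> al i" and be: "\<forall>i\<in>{1..Ns}. 0 \<le> be i"
  shows "cvxpl (\<lambda>th. optval_P2 Ns T S0 (\<lambda>j. Sbar j + al j * th) (\<lambda>j. xbar j + be j * th) p)"
    and "\<And>t1 t2. 0 \<le> t1 \<Longrightarrow> t1 \<le> t2 \<Longrightarrow>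
      optval_P2 Ns T S0 (\<lambda>j. Sbar j + al j * t2) (\<lambda>j. xbar j + be j * t2) p
      \<le> optval_P2 Ns T S0 (\<lambda>j. Sbar j + al j * t1) (\<lambda>j. xbar j + be j * t1) p"
proof -
  define F where "F th = {S. feasible_P2 Ns T S0 (\<lambda>j. Sbar j + al j * th) (\<lambda>j. xbar j + be j * th) p S}" for th
  define X where "X th = obj_P2 Ns T ` F th" for th
  have opt: "optval_P2 Ns T S0 (\<lambda>j. Sbar j + al j * th) (\<lambda>j. xbar j + be j * th) p = Inf (X th)" for th
    unfolding optval_P2_def X_def F_def ..
  have ne: "X th \<noteq> {}" if "th \<ge> 0" for th
  proof -
    have "(\<lambda>i t. S0 i) \<in> F th" unfolding F_def
      using that S0 Sb xb al be by (intro CollectI feasible_exists) (auto intro!: add_nonneg_nonneg add_increasing2)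
    then show ?thesis unfolding X_def by blast
  qed
  have lb: "- (\<Sum>t=1..T. pminus (p t)) \<le> s" if "s \<in> X th" for th s
    using that obj_lb unfolding X_def F_def by blast
  define V where "V = insert (0::nat,0::nat) (insert (0,1) ({1..Ns} \<times> {0..T}))"
  define E where "E = {1..Ns} \<times> {0..T}"
  obtain C' where C': "finite C'" "\<And>x. sat (V - E) C' x \<longleftrightarrow>
      (\<exists>y. sat V (sysC Ns T S0 Sbar xbar al be p) (\<lambda>j. if j \<in> E then y j else x j))"
    using fm_elim[of V E "sysC Ns T S0 Sbar xbar al be p"] sysC_finite unfolding V_def E_def by auto
  have VE: "V - E = {(0,0),(0,1)}" unfolding V_def E_def by auto
  have key: "(\<exists>y. sat V (sysC Ns T S0 Sbar xbar al be p) (\<lambda>j. if j \<in> E then y j else x j)) \<longleftrightarrow>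
      (\<exists>S\<in>F (x (0,0)). obj_P2 Ns T S \<le> x (0,1))" for x
  proof
    assume "\<exists>y. sat V (sysC Ns T S0 Sbar xbar al be p) (\<lambda>j. if j \<in> E then y j else x j)"
    then obtain y where y: "sat V (sysC Ns T S0 Sbar xbar al be p) (\<lambda>j. if j \<in> E then y j else x j)" by blast
    define z where "z = (\<lambda>j. if j \<in> E then y j else x j)"
    have z0: "z (0,0) = x (0,0)" "z (0,1) = x (0,1)" unfolding z_def E_def by auto
    have "feasible_P2 Ns T S0 (\<lambda>j. Sbar j + al j * z (0,0)) (\<lambda>j. xbar j + be j * z (0,0)) p (\<lambda>i t. z (i,t)) \<and>
       (\<Sum>t\<in>{t\<in>{1..T}. p t < 0}. \<Sum>i=1..Ns. z (i,t) - z (i,t-1)) \<le> z (0,1)"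
      using y sysC_sat[of Ns T S0 Sbar xbar al be p z] unfolding z_def V_def by simp
    then show "\<exists>S\<in>F (x (0,0)). obj_P2 Ns T S \<le> x (0,1)"
      unfolding F_def using obj_lin z0 by (intro bexI[of _ "\<lambda>i t. z (i,t)"]) auto
  next
    assume "\<exists>S\<in>F (x (0,0)). obj_P2 Ns T S \<le> x (0,1)"
    then obtain S where S: "S \<in> F (x (0,0))" "obj_P2 Ns T S \<le> x (0,1)" by blast
    define z where "z = (\<lambda>j. if j \<in> E then (\<lambda>(i,t). S i t) j else x j)"
    have z0: "z (0,0) = x (0,0)" "z (0,1) = x (0,1)" unfolding z_def E_def by auto
    have zS: "\<forall>i\<in>{1..Ns}. \<forall>t\<le>T. z (i,t) = S i t" unfolding z_def E_def by auto
    have f: "feasible_P2 Ns T S0 (\<lambda>j. Sbar j + al j * z (0,0)) (\<lambda>j. xbar j + be j * z (0,0)) p S"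
      using S(1) z0 unfolding F_def by simp
    then have f': "feasible_P2 Ns T S0 (\<lambda>j. Sbar j + al j * z (0,0)) (\<lambda>j. xbar j + be j * z (0,0)) p (\<lambda>i t. z (i,t))"
      using feasible_cong[of Ns T "\<lambda>i t. z (i,t)" S] zS by auto
    have "(\<Sum>t\<in>{t\<in>{1..T}. p t < 0}. \<Sum>i=1..Ns. z (i,t) - z (i,t-1)) = (\<Sum>t\<in>{t\<in>{1..T}. p t < 0}. \<Sum>i=1..Ns. S i t - S i (t-1))"
      using zS by (intro sum.cong refl) auto
    also have "\<dots> = obj_P2 Ns T S" using obj_lin[OF f] by simp
    finally have "sat V (sysC Ns T S0 Sbar xbar al be p) z"
      using sysC_sat[of Ns T S0 Sbar xbar al be p z] f' S(2) z0 unfolding V_def by simp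
    then show "\<exists>y. sat V (sysC Ns T S0 Sbar xbar al be p) (\<lambda>j. if j \<in> E then y j else x j)"
      unfolding z_def by blast
  qed
  define K where "K = (\<lambda>c. (fst c (0,0), fst c (0,1), snd c)) ` C'"
  have Q: "(\<forall>k\<in>K. fst k * th + fst (snd k) * w \<le> snd (snd k)) \<longleftrightarrow> (\<exists>s\<in>X th. s \<le> w)" for th w
  proof -
    define x where "x = (\<lambda>j::nat\<times>nat. if j = (0,0) then th else w)"
    have "lin {(0,0),(0,1)} a x = a (0,0) * th + a (0,1) * w" for a
      unfolding lin_def x_def by simp
    then have "(\<forall>k\<in>K. fst k * th + fst (snd k) * w \<le> snd (snd k)) \<longleftrightarrow> sat (V - E) C' x"
      unfolding K_def sat_def VE by auto
    also have "\<dots> \<longleftrightarrow> (\<exists>S\<in>F th. obj_P2 Ns T S \<le> w)" using C'(2) key by (simp add: x_def)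
    also have "\<dots> \<longleftrightarrow> (\<exists>s\<in>X th. s \<le> w)" unfolding X_def by blast
    finally show ?thesis .
  qed
  have "cvxpl (\<lambda>th. Inf (X th))"
    by (rule value_cvxpl[OF _ Q ne lb]) (auto simp: K_def C'(1))
  then show "cvxpl (\<lambda>th. optval_P2 Ns T S0 (\<lambda>j. Sbar j + al j * th) (\<lambda>j. xbar j + be j * th) p)"
    unfolding opt .
  fix t1 t2 :: real assume t: "0 \<le> t1" "t1 \<le> t2"
  have "F t1 \<subseteq> F t2"
  proof
    fix S assume S: "S \<in> F t1"
    have "\<forall>i\<in>{1..Ns}. Sbar i + al i * t1 \<le> Sbar i + al i * t2" using al t by (auto intro: mult_left_mono)
    have "\<forall>i\<in>{1..Ns}. xbar i + be i * t1 \<le> xbar i + be i * t2" using be t by (auto intro: mult_left_mono)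
    then show "S \<in> F t2" unfolding F_def mem_Collect_eq
      by (rule feasible_mono[OF \<open>\<forall>i\<in>{1..Ns}. Sbar i + al i * t1 \<le> Sbar i + al i * t2\<close> _ S[unfolded F_def mem_Collect_eq]])
  qed
  moreover have "bdd_below (X t2)" using lb by (intro bdd_belowI) blast
  ultimately have "Inf (X t2) \<le> Inf (X t1)"
    using ne[OF t(1)] unfolding X_def by (intro cInf_superset_mono) auto
  then show "optval_P2 Ns T S0 (\<lambda>j. Sbar j + al j * t2) (\<lambda>j. xbar j + be j * t2) p
      \<le> optval_P2 Ns T S0 (\<lambda>j. Sbar j + al j * t1) (\<lambda>j. xbar j + be j * t1) p" unfolding opt .
qed

theorem theorem2:
  fixes T Ns N :: nat and P :: "nat \<Rightarrow> nat \<Rightarrow> real"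
    and S0 Sbar xbar :: "nat \<Rightarrow> real"
  assumes "T \<ge> 1" and "Ns \<ge> 1" and "N \<ge> 1"
    and "\<forall>i\<in>{1..Ns}. S0 i \<ge> 0"
    and "\<forall>i\<in>{1..Ns}. Sbar i \<ge> S0 i"
    and "\<forall>i\<in>{1..Ns}. xbar i \<ge> 0"
  shows "(\<forall>k\<in>{1..N}. \<exists>S. feasible_P2 Ns T S0 Sbar xbar (P k) S) \<and>
    (\<forall>i\<in>{1..Ns}. \<forall>a b :: real. a \<ge> 0 \<longrightarrow> b \<ge> 0 \<longrightarrow> (a, b) \<noteq> (0, 0) \<longrightarrow>
      (let f = (\<lambda>\<theta>. EUE N Ns T P S0 (Sbar(i := Sbar i + a * \<theta>)) (xbar(i := xbar i + b * \<theta>)))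
       in continuous_on {0..} f \<and> piecewise_linear_nonneg f \<and>
          (\<forall>\<theta>1 \<theta>2. 0 \<le> \<theta>1 \<longrightarrow> \<theta>1 \<le> \<theta>2 \<longrightarrow> f \<theta>2 \<le> f \<theta>1) \<and>
          (\<forall>\<theta> D. \<theta> > 0 \<longrightarrow> (f has_real_derivative D) (at \<theta>) \<longrightarrow> - D \<ge> 0)))"
proof (intro conjI ballI allI impI)
  fix k assume "k \<in> {1..N}"
  show "\<exists>S. feasible_P2 Ns T S0 Sbar xbar (P k) S"
    using feasible_exists assms(4-6) by blast
next
  fix i :: nat and a b :: real assume i: "i \<in> {1..Ns}" and a: "a \<ge> 0" and b: "b \<ge> 0"
  define al where "al = (\<lambda>j::nat. if j = i then a else 0)"
  define be where "be = (\<lambda>j::nat. if j = i then b else 0)"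
  have al0: "\<forall>j\<in>{1..Ns}. 0 \<le> al j" using a by (auto simp: al_def)
  have be0: "\<forall>j\<in>{1..Ns}. 0 \<le> be j" using b by (auto simp: be_def)
  define v where "v k th = optval_P2 Ns T S0 (\<lambda>j. Sbar j + al j * th) (\<lambda>j. xbar j + be j * th) (P k)" for k th
  define c where "c k = (\<Sum>t=1..T. pminus (P k t))" for k
  have feq: "(\<lambda>\<theta>. EUE N Ns T P S0 (Sbar(i := Sbar i + a * \<theta>)) (xbar(i := xbar i + b * \<theta>)))
     = (\<lambda>th. (1 / real N) * (\<Sum>k=1..N. c k + v k th))"
  proof
    fix th
    have "Sbar(i := Sbar i + a * th) = (\<lambda>j. Sbar j + al j * th)" by (auto simp: al_def fun_eq_iff)
    moreover have "xbar(i := xbar i + b * th) = (\<lambda>j. xbar j + be j * th)" by (auto simp: be_def fun_eq_iff)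
    ultimately show "EUE N Ns T P S0 (Sbar(i := Sbar i + a * th)) (xbar(i := xbar i + b * th))
      = (1 / real N) * (\<Sum>k=1..N. c k + v k th)"
      unfolding EUE_def v_def c_def by simp
  qed
  have vk: "cvxpl (v k)" "\<And>t1 t2. 0 \<le> t1 \<Longrightarrow> t1 \<le> t2 \<Longrightarrow> v k t2 \<le> v k t1" for k
    using profile[OF assms(4) assms(5) assms(6) al0 be0, where T=T and p="P k"] unfolding v_def by auto
  define f where "f = (\<lambda>th. (1 / real N) * (\<Sum>k=1..N. c k + v k th))"
  have cf: "cvxpl f" unfolding f_def
    by (intro cvxpl_scale cvxpl_sum ballI cvxpl_add cvxpl_const vk) auto
  have mf: "\<forall>t1 t2. 0 \<le> t1 \<longrightarrow> t1 \<le> t2 \<longrightarrow> f t2 \<le> f t1"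
  proof (intro allI impI)
    fix t1 t2 :: real assume "0 \<le> t1" "t1 \<le> t2"
    then have "(\<Sum>k=1..N. c k + v k t2) \<le> (\<Sum>k=1..N. c k + v k t1)"
      using vk(2) by (intro sum_mono) auto
    then show "f t2 \<le> f t1" unfolding f_def by (intro mult_left_mono) auto
  qed
  show "let f = (\<lambda>\<theta>. EUE N Ns T P S0 (Sbar(i := Sbar i + a * \<theta>)) (xbar(i := xbar i + b * \<theta>)))
       in continuous_on {0..} f \<and> piecewise_linear_nonneg f \<and>
          (\<forall>\<theta>1 \<theta>2. 0 \<le> \<theta>1 \<longrightarrow> \<theta>1 \<le> \<theta>2 \<longrightarrow> f \<theta>2 \<le> f \<theta>1) \<and>
          (\<forall>\<theta> D. \<theta> > 0 \<longrightarrow> (f has_real_derivative D) (at \<theta>) \<longrightarrow> - D \<ge> 0)"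
    unfolding Let_def feq f_def[symmetric]
    using cvxpl_continuous[OF cf] cvxpl_pl[OF cf] mf mono_deriv[OF mf] by blast
qed

end
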